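(* Let $G=(U,\alpha)$ and $H=(V,\beta)$ be connected graphs with degree functions $p$ and $q$. If $\gamma$ is a weight function on $U\times V$ with degree function $r(u,v)=\sum_{(u',v')\in U\times V}\gamma((u,v),(u',v'))$ satisfying, for all $u,u'\in U$ and $v,v'\in V$, $p(u)\sum_{\tilde v\in V}\gamma((u,v),(u',\tilde v))=\alpha(u,u')\,r(u,v)$ and $q(v)\sum_{\tilde u\in U}\gamma((u,v),(\tilde u,v'))=\beta(v,v')\,r(u,v)$, then $\sum_{v\in V}r(u,v)=p(u)$ for all $u\in U$ and $\sum_{u\in U}r(u,v)=q(v)$ for all $v\in V$.
   Context: A weight function on a finite set $U$ is $\alpha:U\times U\to\mathbb{R}$ with $\alpha\ge0$, $\alpha(u,u')=\alpha(u',u)$, and $\sum_{u,u'}\alpha(u,u')=1$; its degree function is $p(u)=\sum_{u'}\alpha(u,u')$. A graph is $(U,\alpha)$; it is connected if any two distinct vertices are joined by a path of edges $(u,u')$ with $\alpha(u,u')>0$. *)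

theory Defs
  imports Complex_Main
begin

definition weight_fun :: "'a set \<Rightarrow> ('a \<Rightarrow> 'a \<Rightarrow> real) \<Rightarrow> bool" where
  "weight_fun U \<alpha> \<longleftrightarrow> finite U \<and>
     (\<forall>u\<in>U. \<forall>u'\<in>U. \<alpha> u u' \<ge> 0) \<and>
     (\<forall>u\<in>U. \<forall>u'\<in>U. \<alpha> u u' = \<alpha> u' u) \<and>
     (\<Sum>u\<in>U. \<Sum>u'\<in>U. \<alpha> u u') = 1"

definition degree_fun :: "'a set \<Rightarrow> ('a \<Rightarrow> 'a \<Rightarrow> real) \<Rightarrow> 'a \<Rightarrow> real" where
  "degree_fun U \<alpha> u = (\<Sum>u'\<in>U. \<alpha> u u')"

definition edges :: "'a set \<Rightarrow> ('a \<Rightarrow> 'a \<Rightarrow> real) \<Rightarrow> ('a \<times> 'a) set" where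
  "edges U \<alpha> = {(u, u'). u \<in> U \<and> u' \<in> U \<and> \<alpha> u u' > 0}"

definition connected_graph :: "'a set \<Rightarrow> ('a \<Rightarrow> 'a \<Rightarrow> real) \<Rightarrow> bool" where
  "connected_graph U \<alpha> \<longleftrightarrow>
     (\<forall>u\<in>U. \<forall>u'\<in>U. u \<noteq> u' \<longrightarrow> (u, u') \<in> (edges U \<alpha>)\<^sup>+)"

end

theory Submission
  imports Defs
begin

lemma key:
  fixes U :: "'a set" and \<alpha> :: "'a \<Rightarrow> 'a \<Rightarrow> real"
  assumes wf: "weight_fun U \<alpha>" and conn: "connected_graph U \<alpha>"
    and eq: "\<And>u u'. u \<in> U \<Longrightarrow> u' \<in> U \<Longrightarrow> degree_fun U \<alpha> u * M u u' = \<alpha> u u' * R u"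
    and sy: "\<And>u u'. u \<in> U \<Longrightarrow> u' \<in> U \<Longrightarrow> M u u' = M u' u"
    and tot: "sum R U = 1"
  shows "\<forall>u\<in>U. R u = degree_fun U \<alpha> u"
proof -
  define p where "p = degree_fun U \<alpha>"
  have fin: "finite U" and nn: "\<And>u u'. u \<in> U \<Longrightarrow> u' \<in> U \<Longrightarrow> \<alpha> u u' \<ge> 0"
    and sa: "\<And>u u'. u \<in> U \<Longrightarrow> u' \<in> U \<Longrightarrow> \<alpha> u u' = \<alpha> u' u"
    and one: "(\<Sum>u\<in>U. \<Sum>u'\<in>U. \<alpha> u u') = 1"
    using wf unfolding weight_fun_def by auto
  have psum: "sum p U = 1" using one by (simp add: p_def degree_fun_def)
  have pge: "p u \<ge> \<alpha> u u'" if "u \<in> U" "u' \<in> U" for u u'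
    unfolding p_def degree_fun_def
    using member_le_sum[of u' U "\<alpha> u"] nn that fin by auto
  have edge: "R u * p u' = R u' * p u \<and> p u > 0 \<and> p u' > 0"
    if "(u, u') \<in> edges U \<alpha>" for u u'
  proof -
    from that have u: "u \<in> U" "u' \<in> U" "\<alpha> u u' > 0" by (auto simp: edges_def)
    have 1: "p u * M u u' = \<alpha> u u' * R u" using eq u by (simp add: p_def)
    have 2: "p u' * M u u' = \<alpha> u u' * R u'" using eq[of u' u] sy[of u' u] sa[of u' u] u by (simp add: p_def)
    have "\<alpha> u u' * (R u * p u') = \<alpha> u u' * (R u' * p u)"
      using 1 2 by (metis mult.assoc mult.commute)
    moreover have "p u > 0" using pge[of u u'] u by auto
    moreover have "p u' > 0" using pge[of u' u] sa[of u u'] u by auto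
    ultimately show ?thesis using u by simp
  qed
  have path: "R u0 * p u = R u * p u0 \<and> p u > 0" if "(u0, u) \<in> (edges U \<alpha>)\<^sup>+" for u0 u
    using that
  proof (induction rule: trancl_induct)
    case (base y) then show ?case using edge by auto
  next
    case (step y z)
    have a: "R u0 * p y = R y * p u0" "p y > 0" using step by auto
    have b: "R y * p z = R z * p y" "p z > 0" using edge step by auto
    have "p y * (R u0 * p z) = p y * (R z * p u0)"
    proof -
      have "p y * (R u0 * p z) = (R u0 * p y) * p z" by simp
      also have "\<dots> = (R y * p z) * p u0" using a by simp
      also have "\<dots> = p y * (R z * p u0)" using b by simp
      finally show ?thesis .
    qed
    then show ?case using a b by simp
  qed
  obtain u0 where u0: "u0 \<in> U" "p u0 > 0"
  proof (rule ccontr)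
    assume "\<not> thesis"
    then have "\<forall>u\<in>U. p u \<le> 0" using that by force
    then have "sum p U \<le> 0" by (simp add: sum_nonpos)
    then show False using psum by simp
  qed
  have all: "R u0 * p u = R u * p u0" if "u \<in> U" for u
  proof (cases "u = u0")
    case True then show ?thesis by simp
  next
    case False
    then have "(u0, u) \<in> (edges U \<alpha>)\<^sup>+" using conn u0 that unfolding connected_graph_def by auto
    then show ?thesis using path by auto
  qed
  have "(\<Sum>u\<in>U. R u0 * p u) = (\<Sum>u\<in>U. R u * p u0)" using all by simp
  then have "R u0 * sum p U = sum R U * p u0" by (simp add: sum_distrib_left sum_distrib_right)
  then have r0: "R u0 = p u0" using psum tot by simp
  show ?thesis
  proof
    fix u assume "u \<in> U"
    then have "p u0 * p u = R u * p u0" using all r0 by simp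
    then have "R u = p u" using u0 by (metis mult.commute mult_right_cancel less_irrefl)
    then show "R u = degree_fun U \<alpha> u" by (simp add: p_def)
  qed
qed

theorem proposition2p5:
  fixes U :: "'a set" and V :: "'b set"
    and \<alpha> :: "'a \<Rightarrow> 'a \<Rightarrow> real" and \<beta> :: "'b \<Rightarrow> 'b \<Rightarrow> real"
    and \<gamma> :: "'a \<times> 'b \<Rightarrow> 'a \<times> 'b \<Rightarrow> real"
  assumes G: "weight_fun U \<alpha>" "connected_graph U \<alpha>"
    and H: "weight_fun V \<beta>" "connected_graph V \<beta>"
    and W: "weight_fun (U \<times> V) \<gamma>"
    and cp: "\<And>u u' v v'. u \<in> U \<Longrightarrow> u' \<in> U \<Longrightarrow> v \<in> V \<Longrightarrow> v' \<in> V \<Longrightarrow>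
        degree_fun U \<alpha> u * (\<Sum>vt\<in>V. \<gamma> (u, v) (u', vt))
          = \<alpha> u u' * degree_fun (U \<times> V) \<gamma> (u, v)"
    and cq: "\<And>u u' v v'. u \<in> U \<Longrightarrow> u' \<in> U \<Longrightarrow> v \<in> V \<Longrightarrow> v' \<in> V \<Longrightarrow>
        degree_fun V \<beta> v * (\<Sum>ut\<in>U. \<gamma> (u, v) (ut, v'))
          = \<beta> v v' * degree_fun (U \<times> V) \<gamma> (u, v)"
  shows "(\<forall>u\<in>U. (\<Sum>v\<in>V. degree_fun (U \<times> V) \<gamma> (u, v)) = degree_fun U \<alpha> u) \<and>
         (\<forall>v\<in>V. (\<Sum>u\<in>U. degree_fun (U \<times> V) \<gamma> (u, v)) = degree_fun V \<beta> v)"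
proof -
  define r where "r = degree_fun (U \<times> V) \<gamma>"
  have fU: "finite U" using G unfolding weight_fun_def by auto
  have fV: "finite V" using H unfolding weight_fun_def by auto
  have gs: "\<And>x y. x \<in> U \<times> V \<Longrightarrow> y \<in> U \<times> V \<Longrightarrow> \<gamma> x y = \<gamma> y x"
    and g1: "(\<Sum>x\<in>U \<times> V. \<Sum>y\<in>U \<times> V. \<gamma> x y) = 1"
    using W unfolding weight_fun_def by auto
  have rtot: "(\<Sum>u\<in>U. \<Sum>v\<in>V. r (u, v)) = 1"
  proof -
    have "(\<Sum>u\<in>U. \<Sum>v\<in>V. r (u, v)) = (\<Sum>x\<in>U \<times> V. r x)"
      by (simp add: sum.cartesian_product split_def)
    also have "\<dots> = 1" using g1 by (simp add: r_def degree_fun_def)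
    finally show ?thesis .
  qed
  have A: "\<forall>u\<in>U. (\<Sum>v\<in>V. r (u, v)) = degree_fun U \<alpha> u"
  proof (rule key[OF G, where M = "\<lambda>u u'. \<Sum>v\<in>V. \<Sum>vt\<in>V. \<gamma> (u, v) (u', vt)"])
    fix u u' assume u: "u \<in> U" "u' \<in> U"
    have "degree_fun U \<alpha> u * (\<Sum>v\<in>V. \<Sum>vt\<in>V. \<gamma> (u, v) (u', vt))
        = (\<Sum>v\<in>V. degree_fun U \<alpha> u * (\<Sum>vt\<in>V. \<gamma> (u, v) (u', vt)))"
      by (simp add: sum_distrib_left)
    also have "\<dots> = (\<Sum>v\<in>V. \<alpha> u u' * r (u, v))"
      using cp u by (intro sum.cong) (auto simp: r_def)
    also have "\<dots> = \<alpha> u u' * (\<Sum>v\<in>V. r (u, v))" by (simp add: sum_distrib_left)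
    finally show "degree_fun U \<alpha> u * (\<Sum>v\<in>V. \<Sum>vt\<in>V. \<gamma> (u, v) (u', vt)) = \<alpha> u u' * (\<Sum>v\<in>V. r (u, v))" .
  next
    fix u u' assume u: "u \<in> U" "u' \<in> U"
    have "(\<Sum>v\<in>V. \<Sum>vt\<in>V. \<gamma> (u, v) (u', vt)) = (\<Sum>v\<in>V. \<Sum>vt\<in>V. \<gamma> (u', vt) (u, v))"
      using gs u by (intro sum.cong) auto
    also have "\<dots> = (\<Sum>vt\<in>V. \<Sum>v\<in>V. \<gamma> (u', vt) (u, v))" by (rule sum.swap)
    finally show "(\<Sum>v\<in>V. \<Sum>vt\<in>V. \<gamma> (u, v) (u', vt)) = (\<Sum>v\<in>V. \<Sum>vt\<in>V. \<gamma> (u', v) (u, vt))" .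
  next
    show "(\<Sum>u\<in>U. \<Sum>v\<in>V. r (u, v)) = 1" by (rule rtot)
  qed
  have B: "\<forall>v\<in>V. (\<Sum>u\<in>U. r (u, v)) = degree_fun V \<beta> v"
  proof (rule key[OF H, where M = "\<lambda>v v'. \<Sum>u\<in>U. \<Sum>ut\<in>U. \<gamma> (u, v) (ut, v')"])
    fix v v' assume v: "v \<in> V" "v' \<in> V"
    have "degree_fun V \<beta> v * (\<Sum>u\<in>U. \<Sum>ut\<in>U. \<gamma> (u, v) (ut, v'))
        = (\<Sum>u\<in>U. degree_fun V \<beta> v * (\<Sum>ut\<in>U. \<gamma> (u, v) (ut, v')))"
      by (simp add: sum_distrib_left)
    also have "\<dots> = (\<Sum>u\<in>U. \<beta> v v' * r (u, v))"
      using cq v by (intro sum.cong) (auto simp: r_def)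
    also have "\<dots> = \<beta> v v' * (\<Sum>u\<in>U. r (u, v))" by (simp add: sum_distrib_left)
    finally show "degree_fun V \<beta> v * (\<Sum>u\<in>U. \<Sum>ut\<in>U. \<gamma> (u, v) (ut, v')) = \<beta> v v' * (\<Sum>u\<in>U. r (u, v))" .
  next
    fix v v' assume v: "v \<in> V" "v' \<in> V"
    have "(\<Sum>u\<in>U. \<Sum>ut\<in>U. \<gamma> (u, v) (ut, v')) = (\<Sum>u\<in>U. \<Sum>ut\<in>U. \<gamma> (ut, v') (u, v))"
      using gs v by (intro sum.cong) auto
    also have "\<dots> = (\<Sum>ut\<in>U. \<Sum>u\<in>U. \<gamma> (ut, v') (u, v))" by (rule sum.swap)
    finally show "(\<Sum>u\<in>U. \<Sum>ut\<in>U. \<gamma> (u, v) (ut, v')) = (\<Sum>u\<in>U. \<Sum>ut\<in>U. \<gamma> (u, v') (ut, v))" .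
  next
    show "(\<Sum>v\<in>V. \<Sum>u\<in>U. r (u, v)) = 1" using rtot by (subst sum.swap) simp
  qed
  show ?thesis using A B by (simp add: r_def)
qed

end
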